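(* Let $G$ be a finite graph with a self-loop on every vertex, and let $v$ be a vertex of $G$ of degree $d=d(v)$, where the self-loop at $v$ is counted once (so $d-1$ is the number of neighbours of $v$ other than $v$ itself). Then $$R(G,v)=\frac{C(G)}{C(G-\{v\})} \leq 1 + \frac{d^2-d}{2}.$$
   Context: For a finite graph $H$ (undirected, with a self-loop on every vertex and no multiple edges), $C(H)$ denotes the number of vertex-disjoint directed cycle covers of $H$, where cycles of every positive length are allowed: a cycle of length 1 is a single vertex using its loop, and a cycle of length 2 consists of two adjacent vertices using the edge between them in both directions. Equivalently, $C(H)$ is the number of permutations $\sigma$ of the vertex set of $H$ such that for every vertex $u$, either $\sigma(u)=u$ or $\sigma(u)$ is adjacent to $u$. The empty graph has $C=1$. $G-\{v\}$ denotes the graph obtained from $G$ by deleting $v$ and its incident edges, and $R(G,v)=C(G)/C(G-\{v\})$. *)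

theory Defs
  imports Complex_Main "HOL-Combinatorics.Permutations"
begin

text \<open>Every vertex carries a self-loop implicitly (loops are not recorded in E;
  any value of E u u is ignored).\<close>

definition cycle_covers :: "'a set \<Rightarrow> ('a \<Rightarrow> 'a \<Rightarrow> bool) \<Rightarrow> ('a \<Rightarrow> 'a) set" where
  "cycle_covers V E = {\<sigma>. \<sigma> permutes V \<and> (\<forall>u\<in>V. \<sigma> u = u \<or> E u (\<sigma> u))}"

definition C :: "'a set \<Rightarrow> ('a \<Rightarrow> 'a \<Rightarrow> bool) \<Rightarrow> nat" where
  "C V E = card (cycle_covers V E)"

text \<open>Deleting v: restrict the vertex set (edges incident to v disappear with it).\<close>
definition R :: "'a set \<Rightarrow> ('a \<Rightarrow> 'a \<Rightarrow> bool) \<Rightarrow> 'a \<Rightarrow> real" where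
  "R V E v = real (C V E) / real (C (V - {v}) E)"

text \<open>Degree with the self-loop counted once.\<close>
definition deg :: "'a set \<Rightarrow> ('a \<Rightarrow> 'a \<Rightarrow> bool) \<Rightarrow> 'a \<Rightarrow> nat" where
  "deg V E v = card {w\<in>V. w \<noteq> v \<and> E v w} + 1"

end

theory Submission
  imports Defs
begin


definition orb :: "('a \<Rightarrow> 'a) \<Rightarrow> 'a \<Rightarrow> 'a set" where
  "orb f x = range (\<lambda>n. (f ^^ n) x)"

definition mix :: "'a set \<Rightarrow> ('a \<Rightarrow> 'a) \<Rightarrow> ('a \<Rightarrow> 'a) \<Rightarrow> 'a \<Rightarrow> 'a" where
  "mix S f g = (\<lambda>x. if x \<in> S then f x else g x)"

definition sw :: "'a \<Rightarrow> ('a \<Rightarrow> 'a) \<times> ('a \<Rightarrow> 'a) \<Rightarrow> ('a \<Rightarrow> 'a) \<times> ('a \<Rightarrow> 'a)" where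
  "sw x0 PQ = (let S = orb (inv (snd PQ) \<circ> fst PQ) x0 in (mix S (snd PQ) (fst PQ), mix S (fst PQ) (snd PQ)))"

lemma orb_self: "x \<in> orb f x"
  unfolding orb_def by (metis funpow_0 rangeI)

lemma orb_closed: "x \<in> orb f y \<Longrightarrow> f x \<in> orb f y"
proof -
  assume "x \<in> orb f y"
  then obtain n where "x = (f ^^ n) y" unfolding orb_def by auto
  then have "f x = (f ^^ Suc n) y" by simp
  then show ?thesis unfolding orb_def by (metis rangeI)
qed

lemma orb_sub:
  assumes "x0 \<in> T" "\<And>x. x \<in> T \<Longrightarrow> f x \<in> T"
  shows "orb f x0 \<subseteq> T"
proof -
  have "(f ^^ n) x0 \<in> T" for n by (induction n) (auto simp: assms)
  then show ?thesis unfolding orb_def by auto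
qed

lemma orb_cong:
  assumes "x0 \<in> T" "\<And>x. x \<in> T \<Longrightarrow> g x \<in> T" "\<And>x. x \<in> T \<Longrightarrow> f x = g x"
  shows "orb f x0 = orb g x0"
proof -
  have "(f ^^ n) x0 = (g ^^ n) x0 \<and> (g ^^ n) x0 \<in> T" for n
    by (induction n) (auto simp: assms)
  then show ?thesis unfolding orb_def by auto
qed

lemma perm_image_eq:
  assumes "p permutes V" "finite V" "T \<subseteq> V" "p ` T \<subseteq> T"
  shows "p ` T = T"
proof (rule endo_inj_surj)
  show "finite T" using finite_subset[OF assms(3,2)] .
  show "p ` T \<subseteq> T" by fact
  show "inj_on p T" using permutes_inj_on[OF assms(1)] .
qed

lemma inv_perm_closed:
  assumes "p permutes V" "finite V" "T \<subseteq> V" "p ` T \<subseteq> T" "y \<in> T"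
  shows "inv p y \<in> T"
proof -
  have "p ` T = T" using perm_image_eq[OF assms(1-4)] .
  then obtain x where x: "x \<in> T" "y = p x" using assms(5) by blast
  have "inv p y = x" using x(2) permutes_inverses(2)[OF assms(1)] by simp
  then show ?thesis using x(1) by simp
qed

lemma orb_in:
  assumes "p permutes V" "x0 \<in> V"
  shows "orb p x0 \<subseteq> V"
proof (rule orb_sub)
  show "x0 \<in> V" by fact
  show "p x \<in> V" if "x \<in> V" for x using that permutes_in_image[OF assms(1)] by simp
qed

lemma orb_inv:
  assumes "p permutes V" "finite V" "x0 \<in> V"
  shows "orb (inv p) x0 = orb p x0"
proof
  have sub: "orb p x0 \<subseteq> V" using orb_in[OF assms(1,3)] .
  have cl: "p ` orb p x0 \<subseteq> orb p x0" using orb_closed[of _ p x0] by blast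
  show "orb (inv p) x0 \<subseteq> orb p x0"
  proof (rule orb_sub)
    show "x0 \<in> orb p x0" by (rule orb_self)
    show "inv p x \<in> orb p x0" if "x \<in> orb p x0" for x
      using inv_perm_closed[OF assms(1,2) sub cl that] .
  qed
next
  have ip: "inv p permutes V" using permutes_inv[OF assms(1)] .
  have sub: "orb (inv p) x0 \<subseteq> V" using orb_in[OF ip assms(3)] .
  have cl: "inv p ` orb (inv p) x0 \<subseteq> orb (inv p) x0" using orb_closed[of _ "inv p" x0] by blast
  show "orb p x0 \<subseteq> orb (inv p) x0"
  proof (rule orb_sub)
    show "x0 \<in> orb (inv p) x0" by (rule orb_self)
    show "p x \<in> orb (inv p) x0" if "x \<in> orb (inv p) x0" for x
      using inv_perm_closed[OF ip assms(2) sub cl that] permutes_inv_inv[OF assms(1)] by simp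
  qed
qed

lemma mix_permutes:
  assumes P: "P permutes V" and Q: "Q permutes V" and "S \<subseteq> V" and img: "P ` S = Q ` S"
    and "finite V"
  shows "mix S Q P permutes V"
proof (rule inj_imp_permutes)
  show "inj_on (mix S Q P) V"
  proof (rule inj_onI)
    fix x y assume xy: "x \<in> V" "y \<in> V" "mix S Q P x = mix S Q P y"
    have iP: "P a = P b \<Longrightarrow> a = b" for a b using permutes_inj[OF P] by (simp add: inj_eq)
    have iQ: "Q a = Q b \<Longrightarrow> a = b" for a b using permutes_inj[OF Q] by (simp add: inj_eq)
    show "x = y"
    proof (cases "x \<in> S")
      case xS: True
      show ?thesis
      proof (cases "y \<in> S")
        case True
        then have "Q x = Q y" using xy xS by (simp add: mix_def)
        then show ?thesis by (rule iQ)
      next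
        case yS: False
        then have "Q x = P y" using xy xS by (simp add: mix_def)
        moreover have "Q x \<in> Q ` S" using xS by (rule imageI)
        then have "Q x \<in> P ` S" unfolding img .
        then obtain z where z: "z \<in> S" "Q x = P z" by (rule imageE) simp
        have "y = z" using iP[of y z] \<open>Q x = P y\<close> z(2) by simp
        then show ?thesis using z(1) yS by simp
      qed
    next
      case xS: False
      show ?thesis
      proof (cases "y \<in> S")
        case yS: True
        then have "P x = Q y" using xy xS by (simp add: mix_def)
        moreover have "Q y \<in> Q ` S" using yS by (rule imageI)
        then have "Q y \<in> P ` S" unfolding img .
        then obtain z where z: "z \<in> S" "Q y = P z" by (rule imageE) simp
        have "x = z" using iP[of x z] \<open>P x = Q y\<close> z(2) by simp
        then show ?thesis using z(1) xS by simp
      next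
        case False
        then have "P x = P y" using xy xS by (simp add: mix_def)
        then show ?thesis by (rule iP)
      qed
    qed
  qed
  show "finite V" by fact
  show "mix S Q P x \<in> V" if "x \<in> V" for x
    unfolding mix_def using that permutes_in_image[OF P, of x] permutes_in_image[OF Q, of x] by simp
  show "mix S Q P x = x" if "x \<notin> V" for x
  proof -
    have "x \<notin> S" using that assms(3) by blast
    then show ?thesis unfolding mix_def using permutes_not_in[OF P that] by simp
  qed
qed

lemma orbit_facts:
  assumes P: "P permutes V" and Q: "Q permutes V" and fin: "finite V" and x0: "x0 \<in> V"
  defines "S \<equiv> orb (inv Q \<circ> P) x0"
  shows "S \<subseteq> V" "P ` S = Q ` S" "x0 \<in> S"
proof -
  have pi: "inv Q \<circ> P permutes V" using permutes_compose[OF P permutes_inv[OF Q]] .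
  show SV: "S \<subseteq> V" unfolding S_def using orb_in[OF pi x0] .
  have "(inv Q \<circ> P) ` S = S"
  proof (rule perm_image_eq[OF pi fin SV])
    show "(inv Q \<circ> P) ` S \<subseteq> S" unfolding S_def using orb_closed[of _ "inv Q \<circ> P" x0] by blast
  qed
  then have "Q ` ((inv Q \<circ> P) ` S) = Q ` S" by simp
  moreover have "Q ` ((inv Q \<circ> P) ` S) = (\<lambda>x. Q (inv Q (P x))) ` S" by (simp add: image_image)
  moreover have "(\<lambda>x. Q (inv Q (P x))) ` S = P ` S" by (simp add: permutes_inverses(1)[OF Q])
  ultimately show "P ` S = Q ` S" by simp
  show "x0 \<in> S" unfolding S_def by (rule orb_self)
qed

lemma sw_permutes:
  assumes P: "P permutes V" and Q: "Q permutes V" and fin: "finite V" and x0: "x0 \<in> V"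
  shows "fst (sw x0 (P,Q)) permutes V" "snd (sw x0 (P,Q)) permutes V"
proof -
  define S where "S = orb (inv Q \<circ> P) x0"
  note F = orbit_facts[OF assms, folded S_def]
  have "sw x0 (P,Q) = (mix S Q P, mix S P Q)" by (simp add: sw_def Let_def S_def)
  then show "fst (sw x0 (P,Q)) permutes V" "snd (sw x0 (P,Q)) permutes V"
    using mix_permutes[OF P Q F(1) F(2) fin] mix_permutes[OF Q P F(1) F(2)[symmetric] fin] by simp_all
qed

lemma sw_invol:
  assumes P: "P permutes V" and Q: "Q permutes V" and fin: "finite V" and x0: "x0 \<in> V"
  shows "sw x0 (sw x0 (P,Q)) = (P,Q)"
proof -
  define S where "S = orb (inv Q \<circ> P) x0"
  note F = orbit_facts[OF assms, folded S_def]
  define P' where "P' = mix S Q P"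
  define Q' where "Q' = mix S P Q"
  have sw1: "sw x0 (P,Q) = (P',Q')" by (simp add: sw_def Let_def S_def P'_def Q'_def)
  have Q': "Q' permutes V" unfolding Q'_def using mix_permutes[OF Q P F(1) F(2)[symmetric] fin] .
  have pi: "inv Q \<circ> P permutes V" using permutes_compose[OF P permutes_inv[OF Q]] .
  have ipi: "inv (inv Q \<circ> P) = inv P \<circ> Q"
  proof
    fix y
    have "(inv Q \<circ> P) ((inv P \<circ> Q) y) = y"
      by (simp add: permutes_inverses(1)[OF P] permutes_inverses(2)[OF Q])
    then show "inv (inv Q \<circ> P) y = (inv P \<circ> Q) y"
      using permutes_inv_eq[OF pi, of y "(inv P \<circ> Q) y"] by simp
  qed
  have SS: "orb (inv P \<circ> Q) x0 = S"
    using orb_inv[OF pi fin x0] unfolding ipi S_def .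
  have cl: "(inv P \<circ> Q) x \<in> S" if "x \<in> S" for x
  proof -
    have "Q x \<in> Q ` S" using that by (rule imageI)
    then have "Q x \<in> P ` S" unfolding F(2) .
    then obtain z where z: "z \<in> S" "Q x = P z" by (rule imageE) simp
    have "(inv P \<circ> Q) x = z" using z(2) permutes_inverses(2)[OF P, of z] by simp
    then show ?thesis using z(1) by simp
  qed
  have agree: "(inv Q' \<circ> P') x = (inv P \<circ> Q) x" if "x \<in> S" for x
  proof -
    have "Q' ((inv P \<circ> Q) x) = Q x"
      using cl[OF that] permutes_inverses[OF P] by (simp add: Q'_def mix_def)
    then have "inv Q' (Q x) = (inv P \<circ> Q) x" using permutes_inv_eq[OF Q', of "Q x" "(inv P \<circ> Q) x"] by simp
    then show ?thesis using that by (simp add: P'_def mix_def)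
  qed
  have "orb (inv Q' \<circ> P') x0 = orb (inv P \<circ> Q) x0"
    by (rule orb_cong[OF F(3) cl agree])
  then have "orb (inv Q' \<circ> P') x0 = S" using SS by simp
  then have "sw x0 (P',Q') = (mix S Q' P', mix S P' Q')" by (simp add: sw_def Let_def)
  also have "\<dots> = (P,Q)" unfolding mix_def P'_def Q'_def by (simp add: fun_eq_iff)
  finally show ?thesis using sw1 by simp
qed



lemma funpow_period:
  assumes "(f ^^ j) x = x"
  shows "(f ^^ n) x = (f ^^ (n mod j)) x"
proof -
  have q: "(f ^^ (q * j)) x = x" for q
    by (induction q) (simp_all add: funpow_add assms)
  have "(f ^^ n) x = (f ^^ (n mod j + n div j * j)) x" by simp
  also have "\<dots> = (f ^^ (n mod j)) ((f ^^ (n div j * j)) x)" by (simp only: funpow_add o_apply)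
  also have "\<dots> = (f ^^ (n mod j)) x" using q by simp
  finally show ?thesis .
qed

lemma split_orb:
  assumes uw: "u \<noteq> w" and uin: "u \<in> orb pf w" and rho: "\<And>x. rf x = transpose u w (pf x)"
  shows "u \<notin> orb rf w"
proof
  assume uin2: "u \<in> orb rf w"
  obtain m where m: "(pf ^^ m) w = u" using uin unfolding orb_def by auto
  have m0: "m > 0" using m uw by (cases m) auto
  define j where "j = (LEAST n. 0 < n \<and> (pf ^^ n) w \<in> {u, w})"
  have ex: "0 < m \<and> (pf ^^ m) w \<in> {u,w}" using m m0 by simp
  have j: "0 < j \<and> (pf ^^ j) w \<in> {u,w}" unfolding j_def by (rule LeastI[of _ m]) (rule ex)
  have jmin: "\<not> (0 < n \<and> (pf ^^ n) w \<in> {u,w})" if "n < j" for n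
    using that unfolding j_def by (rule not_less_Least)
  have ju: "(pf ^^ j) w = u"
  proof (rule ccontr)
    assume "(pf ^^ j) w \<noteq> u"
    then have jw: "(pf ^^ j) w = w" using j by simp
    have "(pf ^^ (m mod j)) w = u" using funpow_period[OF jw, of m] m by simp
    moreover have "m mod j < j" using j by simp
    ultimately show False using jmin[of "m mod j"] uw by (cases "m mod j = 0") auto
  qed
  have agree: "i < j \<Longrightarrow> (rf ^^ i) w = (pf ^^ i) w" for i
  proof (induction i)
    case 0 show ?case by simp
  next
    case (Suc i)
    then have IH: "(rf ^^ i) w = (pf ^^ i) w" by simp
    have ni: "(pf ^^ Suc i) w \<notin> {u,w}" using jmin[of "Suc i"] Suc.prems by simp
    have "(rf ^^ Suc i) w = rf ((rf ^^ i) w)" by simp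
    also have "\<dots> = rf ((pf ^^ i) w)" using IH by simp
    also have "\<dots> = transpose u w (pf ((pf ^^ i) w))" by (rule rho)
    also have "\<dots> = (pf ^^ Suc i) w" using ni by simp
    finally show ?case .
  qed
  obtain j' where j': "j = Suc j'" using j by (cases j) auto
  have rj: "(rf ^^ j) w = w"
  proof -
    have "(rf ^^ j') w = (pf ^^ j') w" using agree[of j'] j' by simp
    have "(rf ^^ j) w = rf ((rf ^^ j') w)" using j' by simp
    also have "\<dots> = transpose u w (pf ((pf ^^ j') w))" using \<open>(rf ^^ j') w = (pf ^^ j') w\<close> rho by simp
    also have "\<dots> = transpose u w ((pf ^^ j) w)" using j' by simp
    finally have "(rf ^^ j) w = transpose u w ((pf ^^ j) w)" .
    then show ?thesis using ju by simp
  qed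
  obtain n where n: "(rf ^^ n) w = u" using uin2 unfolding orb_def by auto
  have "(rf ^^ (n mod j)) w = u" using funpow_period[OF rj, of n] n by simp
  moreover have nj: "n mod j < j" using j by simp
  ultimately have "(pf ^^ (n mod j)) w = u" using agree[of "n mod j"] by simp
  then show False using jmin[of "n mod j"] nj uw by (cases "n mod j = 0") auto
qed

definition Nset :: "'a set \<Rightarrow> ('a \<Rightarrow> 'a \<Rightarrow> bool) \<Rightarrow> 'a \<Rightarrow> 'a \<Rightarrow> ('a \<Rightarrow> 'a) set" where
  "Nset W E u w = {\<tau>. \<tau> permutes W \<and> \<tau> u = w \<and> (\<forall>x\<in>W. x \<noteq> u \<longrightarrow> \<tau> x = x \<or> E x (\<tau> x))}"

lemma caseB:
  assumes fin: "finite W" and u: "u \<in> W" and w: "w \<in> W" and uw: "u \<noteq> w"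
    and PN: "P \<in> Nset W E u w" and QN: "Q \<in> Nset W E w u"
    and nin: "u \<notin> orb (inv Q \<circ> P) w"
  shows "fst (sw w (P,Q)) \<circ> transpose u w \<in> cycle_covers W E"
    "(fst (sw w (P,Q)) \<circ> transpose u w) u = u"
    "(fst (sw w (P,Q)) \<circ> transpose u w) w = w"
    "snd (sw w (P,Q)) \<in> cycle_covers W E"
    "snd (sw w (P,Q)) u \<noteq> u"
proof -
  have P: "P permutes W" and Pu: "P u = w" and Pv: "\<And>x. x \<in> W \<Longrightarrow> x \<noteq> u \<Longrightarrow> P x = x \<or> E x (P x)"
    using PN unfolding Nset_def by auto
  have Q: "Q permutes W" and Qw: "Q w = u" and Qv: "\<And>x. x \<in> W \<Longrightarrow> x \<noteq> w \<Longrightarrow> Q x = x \<or> E x (Q x)"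
    using QN unfolding Nset_def by auto
  define S where "S = orb (inv Q \<circ> P) w"
  note F = orbit_facts[OF P Q fin w, folded S_def]
  have uS: "u \<notin> S" using nin unfolding S_def .
  have sweq: "sw w (P,Q) = (mix S Q P, mix S P Q)" by (simp add: sw_def Let_def S_def)
  have M1: "mix S Q P permutes W" using mix_permutes[OF P Q F(1) F(2) fin] .
  have M2: "mix S P Q permutes W" using mix_permutes[OF Q P F(1) F(2)[symmetric] fin] .
  have t: "transpose u w permutes W" using permutes_swap_id[OF u w] .
  define X where "X = mix S Q P \<circ> transpose u w"
  have Xp: "X permutes W" unfolding X_def using permutes_compose[OF t M1] .
  have Xu: "X u = u" unfolding X_def using F(3) Qw by (simp add: mix_def)
  have Xw: "X w = w" unfolding X_def using uS Pu by (simp add: mix_def)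
  have Xv: "X x = x \<or> E x (X x)" if "x \<in> W" for x
  proof (cases "x = u \<or> x = w")
    case True then show ?thesis using Xu Xw by auto
  next
    case False
    then have "X x = mix S Q P x" unfolding X_def by simp
    then show ?thesis using Pv[OF that] Qv[OF that] False F(3) uS
      by (cases "x \<in> S") (auto simp: mix_def)
  qed
  have XX: "fst (sw w (P,Q)) \<circ> transpose u w = X" by (simp add: sweq X_def)
  show "fst (sw w (P,Q)) \<circ> transpose u w \<in> cycle_covers W E"
    using Xp Xv unfolding XX cycle_covers_def by simp
  show "(fst (sw w (P,Q)) \<circ> transpose u w) u = u" using Xu unfolding XX .
  show "(fst (sw w (P,Q)) \<circ> transpose u w) w = w" using Xw unfolding XX .
  define Y where "Y = mix S P Q"
  have Yu: "Y u = Q u" unfolding Y_def using uS by (simp add: mix_def)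
  have Qu: "Q u \<noteq> u"
  proof
    assume "Q u = u"
    then have "Q u = Q w" using Qw by simp
    then show False using permutes_inj[OF Q] uw by (simp add: inj_eq)
  qed
  have Yv: "Y x = x \<or> E x (Y x)" if "x \<in> W" for x
  proof (cases "x \<in> S")
    case True
    then have "x \<noteq> u" using uS by auto
    then show ?thesis using Pv[OF that] True unfolding Y_def mix_def by simp
  next
    case False
    then have "x \<noteq> w" using F(3) by auto
    then show ?thesis using Qv[OF that] False unfolding Y_def mix_def by simp
  qed
  show "snd (sw w (P,Q)) \<in> cycle_covers W E"
    using M2 Yv unfolding sweq Y_def cycle_covers_def by simp
  show "snd (sw w (P,Q)) u \<noteq> u" using Yu Qu unfolding sweq Y_def by simp
qed



lemma caseA:
  assumes fin: "finite W" and u: "u \<in> W" and w: "w \<in> W" and uw: "u \<noteq> w"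
    and PN: "P \<in> Nset W E u w" and QN: "Q \<in> Nset W E w u"
    and isin: "u \<in> orb (inv Q \<circ> P) w"
  shows "snd (sw w (P, Q \<circ> transpose u w)) \<in> cycle_covers W E"
    "snd (sw w (P, Q \<circ> transpose u w)) u = u"
    "snd (sw w (P, Q \<circ> transpose u w)) w \<noteq> w"
    "fst (sw w (P, Q \<circ> transpose u w)) \<circ> transpose u w \<in> cycle_covers W E"
    "(fst (sw w (P, Q \<circ> transpose u w)) \<circ> transpose u w) u \<noteq> u"
proof -
  have P: "P permutes W" and Pu: "P u = w" and Pv: "\<And>x. x \<in> W \<Longrightarrow> x \<noteq> u \<Longrightarrow> P x = x \<or> E x (P x)"
    using PN unfolding Nset_def by auto
  have Q: "Q permutes W" and Qw: "Q w = u" and Qv: "\<And>x. x \<in> W \<Longrightarrow> x \<noteq> w \<Longrightarrow> Q x = x \<or> E x (Q x)"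
    using QN unfolding Nset_def by auto
  have t: "transpose u w permutes W" using permutes_swap_id[OF u w] .
  define Q1 where "Q1 = Q \<circ> transpose u w"
  have Q1: "Q1 permutes W" unfolding Q1_def using permutes_compose[OF t Q] .
  have invQ1: "inv Q1 y = transpose u w (inv Q y)" for y
  proof -
    have "Q1 (transpose u w (inv Q y)) = y" unfolding Q1_def by (simp add: permutes_inverses(1)[OF Q])
    then show ?thesis using permutes_inv_eq[OF Q1, of y "transpose u w (inv Q y)"] by simp
  qed
  define S where "S = orb (inv Q1 \<circ> P) w"
  have uS: "u \<notin> S" unfolding S_def
  proof (rule split_orb[OF uw isin])
    fix x show "(inv Q1 \<circ> P) x = transpose u w ((inv Q \<circ> P) x)" by (simp add: invQ1)
  qed
  note F = orbit_facts[OF P Q1 fin w, folded S_def]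
  have sweq: "sw w (P,Q1) = (mix S Q1 P, mix S P Q1)" by (simp add: sw_def Let_def S_def)
  have M1: "mix S Q1 P permutes W" using mix_permutes[OF P Q1 F(1) F(2) fin] .
  have M2: "mix S P Q1 permutes W" using mix_permutes[OF Q1 P F(1) F(2)[symmetric] fin] .
  have Qu: "Q u \<noteq> u"
  proof
    assume "Q u = u"
    then have "Q u = Q w" using Qw by simp
    then show False using permutes_inj[OF Q] uw by (simp add: inj_eq)
  qed
  have Pw: "P w \<noteq> w"
  proof
    assume "P w = w"
    then have "P u = P w" using Pu by simp
    then show False using permutes_inj[OF P] uw by (simp add: inj_eq)
  qed
  define Y where "Y = mix S P Q1"
  have Yu: "Y u = u" unfolding Y_def Q1_def using uS Qw by (simp add: mix_def)
  have Yw: "Y w \<noteq> w" unfolding Y_def using F(3) Pw by (simp add: mix_def)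
  have Yv: "Y x = x \<or> E x (Y x)" if "x \<in> W" for x
  proof (cases "x \<in> S")
    case True
    then have "x \<noteq> u" using uS by auto
    then show ?thesis using Pv[OF that] True unfolding Y_def mix_def by simp
  next
    case False
    then have xw: "x \<noteq> w" using F(3) by auto
    show ?thesis
    proof (cases "x = u")
      case True then show ?thesis using Yu by simp
    next
      case False
      then have "Y x = Q x" unfolding Y_def mix_def Q1_def using \<open>x \<notin> S\<close> xw by simp
      then show ?thesis using Qv[OF that xw] by simp
    qed
  qed
  have YY: "snd (sw w (P, Q \<circ> transpose u w)) = Y" using sweq unfolding Q1_def Y_def by simp
  show "snd (sw w (P, Q \<circ> transpose u w)) \<in> cycle_covers W E"
    using M2 Yv unfolding YY Y_def[symmetric] cycle_covers_def by simp
  show "snd (sw w (P, Q \<circ> transpose u w)) u = u" using Yu unfolding YY .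
  show "snd (sw w (P, Q \<circ> transpose u w)) w \<noteq> w" using Yw unfolding YY .
  define Z where "Z = mix S Q1 P \<circ> transpose u w"
  have Zp: "Z permutes W" unfolding Z_def using permutes_compose[OF t M1] .
  have Zu: "Z u = Q u" unfolding Z_def Q1_def using F(3) by (simp add: mix_def)
  have Zw: "Z w = w" unfolding Z_def using uS Pu by (simp add: mix_def)
  have Zv: "Z x = x \<or> E x (Z x)" if "x \<in> W" for x
  proof (cases "x = u")
    case True then show ?thesis using Zu Qv[OF u uw] by simp
  next
    case xu: False
    show ?thesis
    proof (cases "x = w")
      case True then show ?thesis using Zw by simp
    next
      case xw: False
      then have "Z x = mix S Q1 P x" unfolding Z_def using xu by simp
      also have "\<dots> = (if x \<in> S then Q x else P x)" unfolding mix_def Q1_def using xu xw by simp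
      finally show ?thesis using Pv[OF that xu] Qv[OF that xw] by (cases "x \<in> S") auto
    qed
  qed
  have ZZ: "fst (sw w (P, Q \<circ> transpose u w)) \<circ> transpose u w = Z"
    using sweq unfolding Q1_def Z_def by simp
  show "fst (sw w (P, Q \<circ> transpose u w)) \<circ> transpose u w \<in> cycle_covers W E"
    using Zp Zv unfolding ZZ cycle_covers_def by simp
  show "(fst (sw w (P, Q \<circ> transpose u w)) \<circ> transpose u w) u \<noteq> u"
    using Zu Qu unfolding ZZ by simp
qed



lemma Nset_finite: "finite W \<Longrightarrow> finite (Nset W E u w)"
  by (rule finite_subset[of _ "{p. p permutes W}"]) (auto simp: Nset_def finite_permutations)

lemma CC_finite: "finite W \<Longrightarrow> finite (cycle_covers W E)"
  by (rule finite_subset[of _ "{p. p permutes W}"]) (auto simp: cycle_covers_def finite_permutations)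

lemma Nset_inv_le:
  assumes fin: "finite W" and sym: "\<And>x y. E x y \<Longrightarrow> E y x" and u: "u \<in> W" and w: "w \<in> W" and uw: "u \<noteq> w"
  shows "card (Nset W E u w) \<le> card (Nset W E w u)"
proof (rule card_inj_on_le[of inv])
  show "inj_on inv (Nset W E u w)"
  proof (rule inj_onI)
    fix x y assume xy: "x \<in> Nset W E u w" "y \<in> Nset W E u w" "inv x = inv y"
    have "x permutes W" "y permutes W" using xy(1,2) unfolding Nset_def by auto
    moreover have "inv (inv x) = inv (inv y)" using xy(3) by simp
    ultimately show "x = y" using permutes_inv_inv[of x W] permutes_inv_inv[of y W] by simp
  qed
  show "inv ` Nset W E u w \<subseteq> Nset W E w u"
  proof
    fix s assume "s \<in> inv ` Nset W E u w"
    then obtain t where t: "t \<in> Nset W E u w" "s = inv t" by blast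
    have tp: "t permutes W" and tu: "t u = w" and tv: "\<And>x. x \<in> W \<Longrightarrow> x \<noteq> u \<Longrightarrow> t x = x \<or> E x (t x)"
      using t(1) unfolding Nset_def by auto
    have sp: "s permutes W" using permutes_inv[OF tp] t(2) by simp
    have sw: "s w = u" using t(2) tu permutes_inv_eq[OF tp] by simp
    have sv: "s y = y \<or> E y (s y)" if "y \<in> W" "y \<noteq> w" for y
    proof -
      define x where "x = s y"
      have tx: "t x = y" unfolding x_def t(2) using permutes_inverses(1)[OF tp] by simp
      have xW: "x \<in> W" unfolding x_def using permutes_in_image[OF sp, of y] that(1) by simp
      have xu: "x \<noteq> u" using tx tu that(2) by auto
      have "t x = x \<or> E x (t x)" using tv[OF xW xu] .
      then have "y = x \<or> E x y" using tx by simp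
      then show ?thesis unfolding x_def[symmetric] using sym by auto
    qed
    show "s \<in> Nset W E w u" unfolding Nset_def using sp sw sv by auto
  qed
  show "finite (Nset W E w u)" using Nset_finite[OF fin] .
qed

lemma key_prod:
  assumes fin: "finite W" and u: "u \<in> W" and w: "w \<in> W" and uw: "u \<noteq> w"
  shows "card (Nset W E u w) * card (Nset W E w u)
     \<le> card {\<sigma> \<in> cycle_covers W E. \<sigma> u = u} * card {\<sigma> \<in> cycle_covers W E. \<sigma> u \<noteq> u}"
proof -
  define t where "t = transpose u w"
  define F where "F = (\<lambda>PQ. if u \<notin> orb (inv (snd PQ) \<circ> fst PQ) w
      then (fst (sw w PQ) \<circ> t, snd (sw w PQ))
      else (snd (sw w (fst PQ, snd PQ \<circ> t)), fst (sw w (fst PQ, snd PQ \<circ> t)) \<circ> t))"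
  let ?A = "Nset W E u w \<times> Nset W E w u"
  let ?B = "{\<sigma> \<in> cycle_covers W E. \<sigma> u = u} \<times> {\<sigma> \<in> cycle_covers W E. \<sigma> u \<noteq> u}"
  have tt: "f \<circ> t \<circ> t = f" for f :: "'a \<Rightarrow> 'a" unfolding t_def by (simp add: fun_eq_iff)
  have perms: "P permutes W" "Q permutes W" if "(P,Q) \<in> ?A" for P Q
    using that unfolding Nset_def by auto
  have tp: "t permutes W" unfolding t_def using permutes_swap_id[OF u w] .
  have img: "F ` ?A \<subseteq> ?B"
  proof
    fix z assume "z \<in> F ` ?A"
    then obtain P Q where PQ: "(P,Q) \<in> ?A" "z = F (P,Q)" by auto
    show "z \<in> ?B"
    proof (cases "u \<in> orb (inv Q \<circ> P) w")
      case False
      then have "z = (fst (sw w (P,Q)) \<circ> t, snd (sw w (P,Q)))" using PQ(2) unfolding F_def by simp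
      then show ?thesis using caseB[where E=E, OF fin u w uw _ _ False] PQ(1) unfolding t_def by auto
    next
      case True
      then have "z = (snd (sw w (P, Q \<circ> t)), fst (sw w (P, Q \<circ> t)) \<circ> t)" using PQ(2) unfolding F_def by simp
      then show ?thesis using caseA[where E=E, OF fin u w uw _ _ True] PQ(1) unfolding t_def by auto
    qed
  qed
  have inj: "inj_on F ?A"
  proof (rule inj_onI)
    fix z1 z2 assume z: "z1 \<in> ?A" "z2 \<in> ?A" "F z1 = F z2"
    obtain P1 Q1 where 1: "z1 = (P1,Q1)" by (cases z1)
    obtain P2 Q2 where 2: "z2 = (P2,Q2)" by (cases z2)
    have A1: "(P1,Q1) \<in> ?A" and A2: "(P2,Q2) \<in> ?A" using z 1 2 by auto
    note p1 = perms[OF A1] and p2 = perms[OF A2]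
    have Fe: "F (P1,Q1) = F (P2,Q2)" using z 1 2 by simp
    show "z1 = z2"
    proof (cases "u \<in> orb (inv Q1 \<circ> P1) w"; cases "u \<in> orb (inv Q2 \<circ> P2) w")
      assume c1: "u \<notin> orb (inv Q1 \<circ> P1) w" and c2: "u \<notin> orb (inv Q2 \<circ> P2) w"
      have "fst (sw w (P1,Q1)) \<circ> t = fst (sw w (P2,Q2)) \<circ> t" "snd (sw w (P1,Q1)) = snd (sw w (P2,Q2))"
        using Fe c1 c2 unfolding F_def by simp_all
      then have "fst (sw w (P1,Q1)) \<circ> t \<circ> t = fst (sw w (P2,Q2)) \<circ> t \<circ> t" by simp
      then have "fst (sw w (P1,Q1)) = fst (sw w (P2,Q2))" unfolding tt .
      with \<open>snd (sw w (P1,Q1)) = snd (sw w (P2,Q2))\<close> have "sw w (P1,Q1) = sw w (P2,Q2)" by (simp add: prod_eq_iff)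
      then have "sw w (sw w (P1,Q1)) = sw w (sw w (P2,Q2))" by simp
      then show ?thesis unfolding 1 2 sw_invol[OF p1 fin w] sw_invol[OF p2 fin w] .
    next
      assume c1: "u \<in> orb (inv Q1 \<circ> P1) w" and c2: "u \<in> orb (inv Q2 \<circ> P2) w"
      have "fst (sw w (P1,Q1 \<circ> t)) \<circ> t = fst (sw w (P2,Q2 \<circ> t)) \<circ> t"
        "snd (sw w (P1,Q1 \<circ> t)) = snd (sw w (P2,Q2 \<circ> t))"
        using Fe c1 c2 unfolding F_def by simp_all
      then have "fst (sw w (P1,Q1 \<circ> t)) \<circ> t \<circ> t = fst (sw w (P2,Q2 \<circ> t)) \<circ> t \<circ> t" by simp
      then have "fst (sw w (P1,Q1 \<circ> t)) = fst (sw w (P2,Q2 \<circ> t))" unfolding tt .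
      with \<open>snd (sw w (P1,Q1 \<circ> t)) = snd (sw w (P2,Q2 \<circ> t))\<close>
      have "sw w (P1,Q1 \<circ> t) = sw w (P2,Q2 \<circ> t)" by (simp add: prod_eq_iff)
      then have "sw w (sw w (P1,Q1 \<circ> t)) = sw w (sw w (P2,Q2 \<circ> t))" by simp
      then have "(P1, Q1 \<circ> t) = (P2, Q2 \<circ> t)"
        unfolding sw_invol[OF p1(1) permutes_compose[OF tp p1(2)] fin w]
          sw_invol[OF p2(1) permutes_compose[OF tp p2(2)] fin w] .
      then have "P1 = P2" "Q1 \<circ> t \<circ> t = Q2 \<circ> t \<circ> t" by simp_all
      then show ?thesis unfolding 1 2 tt by simp
    next
      assume c1: "u \<notin> orb (inv Q1 \<circ> P1) w" and c2: "u \<in> orb (inv Q2 \<circ> P2) w"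
      have "fst (F (P1,Q1)) w = w" using caseB(3)[where E=E, OF fin u w uw _ _ c1] A1 c1 unfolding F_def t_def by simp
      moreover have "fst (F (P2,Q2)) w \<noteq> w" using caseA(3)[where E=E, OF fin u w uw _ _ c2] A2 c2 unfolding F_def t_def by simp
      ultimately show ?thesis using Fe by simp
    next
      assume c1: "u \<in> orb (inv Q1 \<circ> P1) w" and c2: "u \<notin> orb (inv Q2 \<circ> P2) w"
      have "fst (F (P2,Q2)) w = w" using caseB(3)[where E=E, OF fin u w uw _ _ c2] A2 c2 unfolding F_def t_def by simp
      moreover have "fst (F (P1,Q1)) w \<noteq> w" using caseA(3)[where E=E, OF fin u w uw _ _ c1] A1 c1 unfolding F_def t_def by simp
      ultimately show ?thesis using Fe by simp
    qed
  qed
  have "card ?A \<le> card ?B"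
    by (rule card_inj_on_le[OF inj img]) (use CC_finite[OF fin] in auto)
  then show ?thesis by (simp add: card_cartesian_product)
qed

lemma key:
  assumes fin: "finite W" and sym: "\<And>x y. E x y \<Longrightarrow> E y x" and u: "u \<in> W" and w: "w \<in> W" and uw: "u \<noteq> w"
  shows "2 * card (Nset W E u w) \<le> card (cycle_covers W E)"
proof -
  define n where "n = card (Nset W E u w)"
  define a where "a = card {\<sigma> \<in> cycle_covers W E. \<sigma> u = u}"
  define b where "b = card {\<sigma> \<in> cycle_covers W E. \<sigma> u \<noteq> u}"
  have "n = card (Nset W E w u)"
    using Nset_inv_le[where E=E, OF fin sym u w uw] Nset_inv_le[where E=E, OF fin sym w u uw[symmetric]] unfolding n_def by simp
  then have nn: "n * n \<le> a * b" using key_prod[where E=E, OF fin u w uw] unfolding n_def a_def b_def by simp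
  have ab: "a + b = card (cycle_covers W E)"
  proof -
    have "cycle_covers W E = {\<sigma> \<in> cycle_covers W E. \<sigma> u = u} \<union> {\<sigma> \<in> cycle_covers W E. \<sigma> u \<noteq> u}" by auto
    moreover have "card (\<dots>) = a + b" unfolding a_def b_def
      by (rule card_Un_disjoint) (use CC_finite[OF fin] in auto)
    ultimately show ?thesis by simp
  qed
  have "4 * (a * b) \<le> (a + b) * (a + b)"
  proof -
    have "int (4 * (a * b)) \<le> int ((a + b) * (a + b))"
      using sum_squares_ge_zero[of "int a - int b" 0] by (simp add: algebra_simps power2_eq_square)
    then show ?thesis by linarith
  qed
  then have "(2 * n) * (2 * n) \<le> (a + b) * (a + b)" using nn by simp
  then have "(2 * n)^2 \<le> (a + b)^2" by (simp only: power2_eq_square)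
  then have "2 * n \<le> a + b" by (rule power2_le_imp_le) simp
  then show ?thesis using ab unfolding n_def by simp
qed



lemma fs_bound:
  assumes fin: "finite V" and v: "v \<in> V" and a: "a \<in> V" and av: "a \<noteq> v"
  shows "card {\<sigma> \<in> cycle_covers V E. \<sigma> a = v \<and> \<sigma> v = b}
     \<le> card {\<tau>. \<tau> permutes (V - {v}) \<and> \<tau> a = b \<and> (\<forall>x\<in>V - {v}. x \<noteq> a \<longrightarrow> \<tau> x = x \<or> E x (\<tau> x))}"
proof (rule card_inj_on_le[of "\<lambda>\<sigma>. \<sigma> \<circ> transpose v a"])
  let ?t = "transpose v a"
  show "inj_on (\<lambda>\<sigma>. \<sigma> \<circ> ?t) {\<sigma> \<in> cycle_covers V E. \<sigma> a = v \<and> \<sigma> v = b}"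
  proof (rule inj_onI)
    fix s1 s2 assume "s1 \<circ> ?t = s2 \<circ> ?t"
    then have "s1 \<circ> ?t \<circ> ?t = s2 \<circ> ?t \<circ> ?t" by simp
    then show "s1 = s2" by (simp add: fun_eq_iff)
  qed
  show "(\<lambda>\<sigma>. \<sigma> \<circ> ?t) ` {\<sigma> \<in> cycle_covers V E. \<sigma> a = v \<and> \<sigma> v = b}
     \<subseteq> {\<tau>. \<tau> permutes (V - {v}) \<and> \<tau> a = b \<and> (\<forall>x\<in>V - {v}. x \<noteq> a \<longrightarrow> \<tau> x = x \<or> E x (\<tau> x))}"
  proof
    fix z assume "z \<in> (\<lambda>\<sigma>. \<sigma> \<circ> ?t) ` {\<sigma> \<in> cycle_covers V E. \<sigma> a = v \<and> \<sigma> v = b}"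
    then obtain s where s: "s \<in> cycle_covers V E" "s a = v" "s v = b" "z = s \<circ> ?t" by auto
    have sp: "s permutes V" and sv: "\<And>x. x \<in> V \<Longrightarrow> s x = x \<or> E x (s x)"
      using s(1) unfolding cycle_covers_def by auto
    have zp: "z permutes V" unfolding s(4) using permutes_compose[OF permutes_swap_id[OF v a] sp] .
    have zv: "z v = v" using s(2,4) by simp
    have zp': "z permutes (V - {v})"
      by (rule permutes_superset[OF zp]) (use zv in auto)
    have za: "z a = b" using s(3,4) by simp
    have zval: "z x = x \<or> E x (z x)" if "x \<in> V - {v}" "x \<noteq> a" for x
    proof -
      have "z x = s x" using that s(4) by simp
      then show ?thesis using sv[of x] that by simp
    qed
    show "z \<in> {\<tau>. \<tau> permutes (V - {v}) \<and> \<tau> a = b \<and> (\<forall>x\<in>V - {v}. x \<noteq> a \<longrightarrow> \<tau> x = x \<or> E x (\<tau> x))}"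
      using zp' za zval by auto
  qed
  show "finite {\<tau>. \<tau> permutes (V - {v}) \<and> \<tau> a = b \<and> (\<forall>x\<in>V - {v}. x \<noteq> a \<longrightarrow> \<tau> x = x \<or> E x (\<tau> x))}"
    by (rule finite_subset[of _ "{p. p permutes (V - {v})}"]) (use fin finite_permutations in auto)
qed

lemma fs_diag:
  assumes fin: "finite V" and v: "v \<in> V" and a: "a \<in> V" and av: "a \<noteq> v"
  shows "card {\<sigma> \<in> cycle_covers V E. \<sigma> a = v \<and> \<sigma> v = a} \<le> C (V - {v}) E"
proof -
  have "card {\<sigma> \<in> cycle_covers V E. \<sigma> a = v \<and> \<sigma> v = a}
     \<le> card {\<tau>. \<tau> permutes (V - {v}) \<and> \<tau> a = a \<and> (\<forall>x\<in>V - {v}. x \<noteq> a \<longrightarrow> \<tau> x = x \<or> E x (\<tau> x))}"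
    by (rule fs_bound[OF fin v a av])
  also have "\<dots> \<le> C (V - {v}) E" unfolding C_def
  proof (rule card_mono)
    show "finite (cycle_covers (V - {v}) E)" using CC_finite fin by blast
    show "{\<tau>. \<tau> permutes (V - {v}) \<and> \<tau> a = a \<and> (\<forall>x\<in>V - {v}. x \<noteq> a \<longrightarrow> \<tau> x = x \<or> E x (\<tau> x))}
      \<subseteq> cycle_covers (V - {v}) E" unfolding cycle_covers_def by auto
  qed
  finally show ?thesis .
qed

lemma fs_off:
  assumes fin: "finite V" and sym: "\<And>x y. E x y \<Longrightarrow> E y x" and v: "v \<in> V" and a: "a \<in> V" and av: "a \<noteq> v"
    and b: "b \<in> V" and bv: "b \<noteq> v" and ab: "a \<noteq> b"
  shows "2 * card {\<sigma> \<in> cycle_covers V E. \<sigma> a = v \<and> \<sigma> v = b} \<le> C (V - {v}) E"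
proof -
  have "card {\<sigma> \<in> cycle_covers V E. \<sigma> a = v \<and> \<sigma> v = b} \<le> card (Nset (V - {v}) E a b)"
    using fs_bound[OF fin v a av, of E b] unfolding Nset_def .
  moreover have "2 * card (Nset (V - {v}) E a b) \<le> C (V - {v}) E"
    unfolding C_def using key[where E=E, OF _ sym _ _ ab] fin a av b bv by simp
  ultimately show ?thesis by simp
qed



theorem theorem2p1:
  fixes V :: "'a set" and E :: "'a \<Rightarrow> 'a \<Rightarrow> bool" and v :: 'a
  assumes "finite V"
    and "\<And>x y. E x y \<Longrightarrow> E y x"
    and "v \<in> V"
  shows "R V E v \<le> 1 + (real (deg V E v) ^ 2 - real (deg V E v)) / 2"
proof -
  note fin = assms(1) and sym = assms(2) and v = assms(3)
  define X where "X = {w\<in>V. w \<noteq> v \<and> E v w}"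
  define k where "k = card X"
  define c where "c = C (V - {v}) E"
  define Fs where "Fs p = {\<sigma> \<in> cycle_covers V E. \<sigma> (fst p) = v \<and> \<sigma> v = snd p}" for p
  define F0 where "F0 = {\<sigma> \<in> cycle_covers V E. \<sigma> v = v}"
  have finX: "finite X" using fin unfolding X_def by simp
  have fin': "finite (V - {v})" using fin by simp
  have cpos: "c > 0"
  proof -
    have "id \<in> cycle_covers (V - {v}) E" unfolding cycle_covers_def by (simp add: permutes_id)
    then have "cycle_covers (V - {v}) E \<noteq> {}" by auto
    then show ?thesis unfolding c_def C_def using CC_finite[OF fin', of E] by (simp add: card_gt_0_iff)
  qed
  have cover: "cycle_covers V E \<subseteq> F0 \<union> (\<Union>p\<in>X\<times>X. Fs p)"
  proof
    fix \<sigma> assume s: "\<sigma> \<in> cycle_covers V E"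
    have sp: "\<sigma> permutes V" and sv: "\<And>x. x \<in> V \<Longrightarrow> \<sigma> x = x \<or> E x (\<sigma> x)"
      using s unfolding cycle_covers_def by auto
    show "\<sigma> \<in> F0 \<union> (\<Union>p\<in>X\<times>X. Fs p)"
    proof (cases "\<sigma> v = v")
      case True then show ?thesis using s unfolding F0_def by simp
    next
      case False
      define a where "a = inv \<sigma> v"
      have sa: "\<sigma> a = v" unfolding a_def using permutes_inverses(1)[OF sp] by simp
      have aV: "a \<in> V" unfolding a_def using permutes_in_image[OF permutes_inv[OF sp], of v] v by simp
      have av: "a \<noteq> v" using sa False by auto
      have "E a v" using sv[OF aV] sa av by auto
      then have Eva: "E v a" by (rule sym)
      have bV: "\<sigma> v \<in> V" using permutes_in_image[OF sp, of v] v by simp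
      have Evb: "E v (\<sigma> v)" using sv[OF v] False by simp
      have "(a, \<sigma> v) \<in> X \<times> X" unfolding X_def using aV av Eva bV False Evb by auto
      moreover have "\<sigma> \<in> Fs (a, \<sigma> v)" unfolding Fs_def using s sa by simp
      ultimately show ?thesis by (rule UN_I[THEN UnI2])
    qed
  qed
  have finU: "finite (F0 \<union> (\<Union>p\<in>X\<times>X. Fs p))"
    by (rule finite_subset[of _ "cycle_covers V E"]) (auto simp: F0_def Fs_def CC_finite[OF fin])
  have "C V E \<le> card (F0 \<union> (\<Union>p\<in>X\<times>X. Fs p))" unfolding C_def
    by (rule card_mono[OF finU cover])
  also have "\<dots> \<le> card F0 + card (\<Union>p\<in>X\<times>X. Fs p)" by (rule card_Un_le)
  also have "card (\<Union>p\<in>X\<times>X. Fs p) \<le> (\<Sum>p\<in>X\<times>X. card (Fs p))"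
    by (rule card_UN_le) (simp add: finX)
  finally have CV: "C V E \<le> card F0 + (\<Sum>p\<in>X\<times>X. card (Fs p))" by simp
  have F0c: "card F0 \<le> c" unfolding c_def C_def
  proof (rule card_mono)
    show "finite (cycle_covers (V - {v}) E)" using CC_finite[OF fin'] .
    show "F0 \<subseteq> cycle_covers (V - {v}) E"
    proof
      fix \<sigma> assume "\<sigma> \<in> F0"
      then have sp: "\<sigma> permutes V" and sv: "\<And>x. x \<in> V \<Longrightarrow> \<sigma> x = x \<or> E x (\<sigma> x)" and svv: "\<sigma> v = v"
        unfolding F0_def cycle_covers_def by auto
      have "\<sigma> permutes (V - {v})" by (rule permutes_superset[OF sp]) (use svv in auto)
      then show "\<sigma> \<in> cycle_covers (V - {v}) E" using sv unfolding cycle_covers_def by auto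
    qed
  qed
  have Fsb: "real (card (Fs p)) \<le> (if fst p = snd p then real c else real c / 2)" if "p \<in> X \<times> X" for p
  proof -
    obtain a b where p: "p = (a,b)" by (cases p)
    have a: "a \<in> V" "a \<noteq> v" and b: "b \<in> V" "b \<noteq> v" using that p unfolding X_def by auto
    show ?thesis
    proof (cases "a = b")
      case True
      have "card (Fs p) \<le> c" unfolding p Fs_def c_def using fs_diag[OF fin v a, of E] True by simp
      then show ?thesis using True p by simp
    next
      case False
      have "2 * card (Fs p) \<le> c" unfolding p Fs_def c_def using fs_off[OF fin sym v a b False] by simp
      then have "2 * real (card (Fs p)) \<le> real c" by linarith
      then show ?thesis using False p by simp
    qed
  qed
  have sumb: "(\<Sum>p\<in>X\<times>X. real (card (Fs p))) \<le> (\<Sum>p\<in>X\<times>X. (if fst p = snd p then real c else real c / 2))"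
    by (rule sum_mono) (rule Fsb)
  have inner: "(\<Sum>b\<in>X. (if a = b then real c else real c / 2)) = real c + (real k - 1) * real c / 2" if aX: "a \<in> X" for a
  proof -
    have "(\<Sum>b\<in>X. (if a = b then real c else real c / 2))
        = (if a = a then real c else real c / 2) + (\<Sum>b\<in>X - {a}. (if a = b then real c else real c / 2))"
      by (rule sum.remove[OF finX aX])
    also have "(\<Sum>b\<in>X - {a}. (if a = b then real c else real c / 2)) = (\<Sum>b\<in>X - {a}. real c / 2)"
      by (rule sum.cong) auto
    also have "\<dots> = real (card (X - {a})) * (real c / 2)" by simp
    also have "card (X - {a}) = k - 1" unfolding k_def using aX finX by simp
    also have "real (k - 1) = real k - 1"
    proof -
      have "X \<noteq> {}" using aX by auto
      then have "k > 0" unfolding k_def using finX by (simp add: card_gt_0_iff)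
      then show ?thesis by simp
    qed
    finally show ?thesis by simp
  qed
  have sumeq: "(\<Sum>p\<in>X\<times>X. (if fst p = snd p then real c else real c / 2))
      = real k * (real c + (real k - 1) * real c / 2)"
  proof -
    have "(\<Sum>p\<in>X\<times>X. (if fst p = snd p then real c else real c / 2))
        = (\<Sum>a\<in>X. \<Sum>b\<in>X. (if a = b then real c else real c / 2))"
      by (simp add: sum.cartesian_product case_prod_beta')
    also have "\<dots> = (\<Sum>a\<in>X. real c + (real k - 1) * real c / 2)"
      by (rule sum.cong) (simp_all add: inner)
    also have "\<dots> = real k * (real c + (real k - 1) * real c / 2)" unfolding k_def by simp
    finally show ?thesis .
  qed
  have CVr: "real (C V E) \<le> real c + real k * (real c + (real k - 1) * real c / 2)"
  proof -
    have "real (C V E) \<le> real (card F0 + (\<Sum>p\<in>X\<times>X. card (Fs p)))"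
      using CV by (simp only: of_nat_le_iff)
    also have "\<dots> = real (card F0) + (\<Sum>p\<in>X\<times>X. real (card (Fs p)))"
      by (simp only: of_nat_add of_nat_sum)
    finally have "real (C V E) \<le> real (card F0) + (\<Sum>p\<in>X\<times>X. real (card (Fs p)))" .
    then show ?thesis using F0c sumb sumeq by linarith
  qed
  have degk: "deg V E v = k + 1" unfolding deg_def k_def X_def by simp
  have "R V E v = real (C V E) / real c" unfolding R_def c_def by simp
  also have "\<dots> \<le> (real c + real k * (real c + (real k - 1) * real c / 2)) / real c"
    using CVr cpos by (simp add: divide_right_mono)
  also have "\<dots> = 1 + real k * (1 + (real k - 1) / 2)"
    using cpos by (simp add: field_simps)
  also have "\<dots> = 1 + (real (deg V E v) ^ 2 - real (deg V E v)) / 2"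
    unfolding degk by (simp add: field_simps power2_eq_square)
  finally show ?thesis .
qed

end
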